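(* For every nonempty finite poset $X$, \[ Z_{D(X)}(x)=\frac{x^3}{(1-x)^2}\,\frac{d}{dx}Z_X(x),\qquad Z^+_{D(X)}(x)=\frac{x}{(1-x)^2}\,\frac{d}{dx}Z^+_X(x). \] In particular, for $n\ge1$, $Z_{D(\langle n\rangle)}=n\,\zeta_{n+2}+(n+1)\,\zeta_{n+3}$, where $\zeta_j=\frac{x^j}{(1-x)^{j+1}}$.
   Context: For $n\ge1$, $\langle n\rangle$ is the chain $1<\dots<n$. For a finite poset $X$, $\Omega(X,n)$ (resp. $\Omega^+(X,n)$) is the number of maps $f:X\to\langle n\rangle$ with $u<v\Rightarrow f(u)<f(v)$ (resp. $u\le v\Rightarrow f(u)\le f(v)$); $Z_X(x)=\sum_{n\ge1}\Omega(X,n)x^n$ and $Z^+_X(x)=\sum_{n\ge1}\Omega^+(X,n)x^n$. The concatenation $\mu(Y,W)$ is the disjoint union of $Y$ and $W$ with their orders and every element of $Y$ below every element of $W$; $Y\sqcup W$ is the disjoint union with no relations between $Y$ and $W$. The handle operation is $D(X)=\mu\big(\langle1\rangle,\mu(\langle1\rangle\sqcup X,\langle1\rangle)\big)$, i.e. $X$ together with a new minimum $x_0$, a new maximum $x_1$, and a new element $y$ with $x_0<y<x_1$ incomparable to all elements of $X$. *)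

theory Defs
  imports "HOL-Library.FuncSet" "HOL-Computational_Algebra.Formal_Power_Series"
begin

definition poset_on :: "'a set \<Rightarrow> ('a \<Rightarrow> 'a \<Rightarrow> bool) \<Rightarrow> bool" where
  "poset_on A le \<longleftrightarrow>
     (\<forall>x\<in>A. le x x) \<and>
     (\<forall>x\<in>A. \<forall>y\<in>A. le x y \<and> le y x \<longrightarrow> x = y) \<and>
     (\<forall>x\<in>A. \<forall>y\<in>A. \<forall>z\<in>A. le x y \<and> le y z \<longrightarrow> le x z)"

definition Omega :: "'a set \<Rightarrow> ('a \<Rightarrow> 'a \<Rightarrow> bool) \<Rightarrow> nat \<Rightarrow> nat" where
  "Omega A le n = card {f \<in> A \<rightarrow>\<^sub>E {1..n}.
      \<forall>u\<in>A. \<forall>v\<in>A. (le u v \<and> u \<noteq> v) \<longrightarrow> f u < f v}"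

definition Omega_plus :: "'a set \<Rightarrow> ('a \<Rightarrow> 'a \<Rightarrow> bool) \<Rightarrow> nat \<Rightarrow> nat" where
  "Omega_plus A le n = card {f \<in> A \<rightarrow>\<^sub>E {1..n}.
      \<forall>u\<in>A. \<forall>v\<in>A. le u v \<longrightarrow> f u \<le> f v}"

definition Z :: "'a set \<Rightarrow> ('a \<Rightarrow> 'a \<Rightarrow> bool) \<Rightarrow> rat fps" where
  "Z A le = Abs_fps (\<lambda>n. if n \<ge> 1 then of_nat (Omega A le n) else 0)"

definition Z_plus :: "'a set \<Rightarrow> ('a \<Rightarrow> 'a \<Rightarrow> bool) \<Rightarrow> rat fps" where
  "Z_plus A le = Abs_fps (\<lambda>n. if n \<ge> 1 then of_nat (Omega_plus A le n) else 0)"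

text \<open>The handle operation D(X): X plus new minimum x0 = Inr 0, new element y = Inr 1,
  new maximum x1 = Inr 2, with x0 < y < x1 and y incomparable to X.\<close>
definition D_carrier :: "'a set \<Rightarrow> ('a + nat) set" where
  "D_carrier A = Inl ` A \<union> {Inr 0, Inr 1, Inr 2}"

definition D_le :: "('a \<Rightarrow> 'a \<Rightarrow> bool) \<Rightarrow> ('a + nat) \<Rightarrow> ('a + nat) \<Rightarrow> bool" where
  "D_le le u v \<longleftrightarrow> u = Inr 0 \<or> v = Inr 2 \<or> u = v \<or>
     (\<exists>a b. u = Inl a \<and> v = Inl b \<and> le a b)"

definition zeta :: "nat \<Rightarrow> rat fps" where
  "zeta j = fps_X ^ j / (1 - fps_X) ^ (j + 1)"

end

theory Submission
  imports Defs
begin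

lemma coeffV: "fps_nth (inverse ((1 - fps_X)^2 :: rat fps)) i = of_nat (i+1)"
  using one_minus_const_fps_X_neg_power'[of 2 "1::rat"] by simp

lemma reidx:
  fixes g :: "nat \<Rightarrow> nat"
  shows "(\<Sum>m\<in>{1..k+1}. (k+2-m)*(m*g m)) = (\<Sum>i=0..k. (i+1)*((k+1-i)*g(k+1-i)))"
  by (rule sum.reindex_bij_witness[of _ "\<lambda>i. k+1-i" "\<lambda>m. k+1-m"]) (auto simp: Suc_diff_le)

lemma reidx_strict:
  fixes g :: "nat \<Rightarrow> nat"
  shows "(\<Sum>m<k+3. (k+3-1-m)*(m*g m)) = (\<Sum>i=0..k. (i+1)*((k+1-i)*g(k+1-i)))"
proof -
  have "{..<k+3} = insert 0 (insert (k+2) {1..k+1})" by auto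
  then have "(\<Sum>m<k+3. (k+3-1-m)*(m*g m)) = (\<Sum>m\<in>{1..k+1}. (k+2-m)*(m*g m))"
    by simp
  then show ?thesis using reidx by simp
qed

lemma strict_fps:
  assumes "\<And>n. c n = (\<Sum>m<n. (n-1-m)*(m*w m))"
  shows "Abs_fps (\<lambda>n. if n \<ge> 1 then of_nat (c n) else 0)
     = fps_X ^ 3 / (1 - fps_X) ^ 2 * fps_deriv (Abs_fps (\<lambda>n. if n \<ge> 1 then (of_nat (w n)::rat) else 0))"
proof (rule fps_ext)
  fix n
  have d: "fps_X ^ 3 / (1 - fps_X) ^ 2 = fps_X ^ 3 * inverse ((1 - fps_X) ^ 2 :: rat fps)"
    by (simp add: fps_divide_unit)
  show "fps_nth (Abs_fps (\<lambda>n. if n \<ge> 1 then of_nat (c n) else 0)) n = fps_nth (fps_X ^ 3 / (1 - fps_X) ^ 2 * fps_deriv (Abs_fps (\<lambda>n. if n \<ge> 1 then (of_nat (w n)::rat) else 0))) n"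
  proof (cases "n < 3")
    case True
    then have "c n = 0" unfolding assms by (intro sum.neutral) auto
    then show ?thesis using True by (simp add: d mult.assoc fps_X_power_mult_nth)
  next
    case False
    then obtain k where k: "n = k+3" by (metis add.commute le_Suc_ex not_less)
    have cn: "c n = (\<Sum>i=0..k. (i+1)*((k+1-i)*w(k+1-i)))" unfolding assms k by (rule reidx_strict)
    have "fps_nth (fps_X ^ 3 / (1 - fps_X) ^ 2 * fps_deriv (Abs_fps (\<lambda>n. if n \<ge> 1 then (of_nat (w n)::rat) else 0))) n
       = fps_nth (inverse ((1 - fps_X) ^ 2 :: rat fps) * fps_deriv (Abs_fps (\<lambda>n. if n \<ge> 1 then (of_nat (w n)::rat) else 0))) k"
      unfolding d mult.assoc fps_X_power_mult_nth using k by simp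
    also have "\<dots> = (\<Sum>i=0..k. of_nat (i+1) * (of_nat (k-i+1) * of_nat (w (k-i+1))))"
      unfolding fps_mult_nth coeffV by simp
    finally have e: "fps_nth (fps_X ^ 3 / (1 - fps_X) ^ 2 * fps_deriv (Abs_fps (\<lambda>n. if n \<ge> 1 then (of_nat (w n)::rat) else 0))) n = (\<Sum>i=0..k. of_nat (i+1) * (of_nat (k-i+1) * of_nat (w (k-i+1))))" .
    have "(of_nat (c n)::rat) = (\<Sum>i=0..k. of_nat (i+1) * (of_nat (k-i+1) * of_nat (w (k-i+1))))"
      unfolding cn of_nat_sum
    proof (intro sum.cong refl)
      fix i assume "i \<in> {0..k}"
      then have ee: "k+1-i = k-i+1" by simp
      show "(of_nat ((i + 1) * ((k + 1 - i) * w (k + 1 - i)))::rat) = of_nat (i + 1) * (of_nat (k - i + 1) * of_nat (w (k - i + 1)))"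
        by (simp only: ee of_nat_mult)
    qed
    then show ?thesis using e k by simp
  qed
qed

lemma weak_fps:
  assumes "\<And>n. c n = (\<Sum>m\<in>{1..n}. (n+1-m)*(m*w m))"
  shows "Abs_fps (\<lambda>n. if n \<ge> 1 then of_nat (c n) else 0)
     = fps_X / (1 - fps_X) ^ 2 * fps_deriv (Abs_fps (\<lambda>n. if n \<ge> 1 then (of_nat (w n)::rat) else 0))"
proof (rule fps_ext)
  fix n
  have d: "fps_X / (1 - fps_X) ^ 2 = fps_X ^ 1 * inverse ((1 - fps_X) ^ 2 :: rat fps)"
    by (simp add: fps_divide_unit)
  show "fps_nth (Abs_fps (\<lambda>n. if n \<ge> 1 then of_nat (c n) else 0)) n = fps_nth (fps_X / (1 - fps_X) ^ 2 * fps_deriv (Abs_fps (\<lambda>n. if n \<ge> 1 then (of_nat (w n)::rat) else 0))) n"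
  proof (cases "n < 1")
    case True
    then show ?thesis by (simp add: d mult.assoc fps_X_power_mult_nth del: power_one_right)
  next
    case False
    then obtain k where k: "n = k+1" by (metis add.commute le_Suc_ex not_less)
    have cn: "c n = (\<Sum>i=0..k. (i+1)*((k+1-i)*w(k+1-i)))" unfolding assms k using reidx[of k w] by simp
    have "fps_nth (fps_X / (1 - fps_X) ^ 2 * fps_deriv (Abs_fps (\<lambda>n. if n \<ge> 1 then (of_nat (w n)::rat) else 0))) n
       = fps_nth (inverse ((1 - fps_X) ^ 2 :: rat fps) * fps_deriv (Abs_fps (\<lambda>n. if n \<ge> 1 then (of_nat (w n)::rat) else 0))) k"
      unfolding d mult.assoc fps_X_power_mult_nth using k by simp
    also have "\<dots> = (\<Sum>i=0..k. of_nat (i+1) * (of_nat (k-i+1) * of_nat (w (k-i+1))))"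
      unfolding fps_mult_nth coeffV by simp
    finally have e: "fps_nth (fps_X / (1 - fps_X) ^ 2 * fps_deriv (Abs_fps (\<lambda>n. if n \<ge> 1 then (of_nat (w n)::rat) else 0))) n = (\<Sum>i=0..k. of_nat (i+1) * (of_nat (k-i+1) * of_nat (w (k-i+1))))" .
    have "(of_nat (c n)::rat) = (\<Sum>i=0..k. of_nat (i+1) * (of_nat (k-i+1) * of_nat (w (k-i+1))))"
      unfolding cn of_nat_sum
    proof (intro sum.cong refl)
      fix i assume "i \<in> {0..k}"
      then have ee: "k+1-i = k-i+1" by simp
      show "(of_nat ((i + 1) * ((k + 1 - i) * w (k + 1 - i)))::rat) = of_nat (i + 1) * (of_nat (k - i + 1) * of_nat (w (k - i + 1)))"
        by (simp only: ee of_nat_mult)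
    qed
    then show ?thesis using e k by simp
  qed
qed

definition SF :: "'a set \<Rightarrow> ('a\<Rightarrow>'a\<Rightarrow>bool) \<Rightarrow> nat \<Rightarrow> nat \<Rightarrow> ('a\<Rightarrow>nat) set" where
  "SF A le d m = {g \<in> A \<rightarrow>\<^sub>E {d+1..d+m}. \<forall>u\<in>A. \<forall>v\<in>A. le u v \<and> u\<noteq>v \<longrightarrow> g u < g v}"
definition WF :: "'a set \<Rightarrow> ('a\<Rightarrow>'a\<Rightarrow>bool) \<Rightarrow> nat \<Rightarrow> nat \<Rightarrow> ('a\<Rightarrow>nat) set" where
  "WF A le d m = {g \<in> A \<rightarrow>\<^sub>E {d+1..d+m}. \<forall>u\<in>A. \<forall>v\<in>A. le u v \<longrightarrow> g u \<le> g v}"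

lemma SF_card: "card (SF A le d m) = Omega A le m"
proof -
  have "bij_betw (\<lambda>g. restrict (\<lambda>x. g x + d) A) (SF A le 0 m) (SF A le d m)"
  proof (rule bij_betw_byWitness[where f'="\<lambda>g. restrict (\<lambda>x. g x - d) A"])
    show "\<forall>a\<in>SF A le 0 m. restrict (\<lambda>x. restrict (\<lambda>x. a x + d) A x - d) A = a"
      by (auto simp: SF_def PiE_def extensional_def fun_eq_iff)
    show "\<forall>a\<in>SF A le d m. restrict (\<lambda>x. restrict (\<lambda>x. a x - d) A x + d) A = a"
      by (auto simp: SF_def PiE_def Pi_def extensional_def fun_eq_iff)
    show "(\<lambda>g. restrict (\<lambda>x. g x + d) A) ` SF A le 0 m \<subseteq> SF A le d m"
      by (auto simp: SF_def PiE_def Pi_def)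
    show "(\<lambda>g. restrict (\<lambda>x. g x - d) A) ` SF A le d m \<subseteq> SF A le 0 m"
      by (fastforce simp: SF_def PiE_def Pi_def)
  qed
  then have "card (SF A le 0 m) = card (SF A le d m)" by (rule bij_betw_same_card)
  moreover have "SF A le 0 m = {f \<in> A \<rightarrow>\<^sub>E {1..m}.
      \<forall>u\<in>A. \<forall>v\<in>A. (le u v \<and> u \<noteq> v) \<longrightarrow> f u < f v}" by (simp add: SF_def)
  ultimately show ?thesis by (simp add: Omega_def)
qed

lemma WF_card: "card (WF A le d m) = Omega_plus A le m"
proof -
  have "bij_betw (\<lambda>g. restrict (\<lambda>x. g x + d) A) (WF A le 0 m) (WF A le d m)"
  proof (rule bij_betw_byWitness[where f'="\<lambda>g. restrict (\<lambda>x. g x - d) A"])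
    show "\<forall>a\<in>WF A le 0 m. restrict (\<lambda>x. restrict (\<lambda>x. a x + d) A x - d) A = a"
      by (auto simp: WF_def PiE_def extensional_def fun_eq_iff)
    show "\<forall>a\<in>WF A le d m. restrict (\<lambda>x. restrict (\<lambda>x. a x - d) A x + d) A = a"
      by (auto simp: WF_def PiE_def Pi_def extensional_def fun_eq_iff)
    show "(\<lambda>g. restrict (\<lambda>x. g x + d) A) ` WF A le 0 m \<subseteq> WF A le d m"
      by (auto simp: WF_def PiE_def Pi_def)
    show "(\<lambda>g. restrict (\<lambda>x. g x - d) A) ` WF A le d m \<subseteq> WF A le 0 m"
      by (fastforce simp: WF_def PiE_def Pi_def)
  qed
  then have "card (WF A le 0 m) = card (WF A le d m)" by (rule bij_betw_same_card)
  moreover have "WF A le 0 m = {f \<in> A \<rightarrow>\<^sub>E {1..m}.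
      \<forall>u\<in>A. \<forall>v\<in>A. le u v \<longrightarrow> f u \<le> f v}" by (simp add: WF_def)
  ultimately show ?thesis by (simp add: Omega_plus_def)
qed

lemma D_strict_iff:
  fixes f :: "'a + nat \<Rightarrow> nat"
  shows   "(\<forall>u\<in>D_carrier A. \<forall>v\<in>D_carrier A. (D_le le u v \<and> u \<noteq> v) \<longrightarrow> f u < f v) \<longleftrightarrow>
   (f (Inr 0) < f (Inr 1) \<and> f (Inr 1) < f (Inr 2) \<and> f (Inr 0) < f (Inr 2) \<and>
    (\<forall>x\<in>A. f (Inr 0) < f (Inl x) \<and> f (Inl x) < f (Inr 2)) \<and>
    (\<forall>x\<in>A. \<forall>y\<in>A. le x y \<and> x \<noteq> y \<longrightarrow> f (Inl x) < f (Inl y)))"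
  unfolding D_carrier_def D_le_def by auto

lemma D_weak_iff:
  fixes f :: "'a + nat \<Rightarrow> nat"
  shows   "(\<forall>u\<in>D_carrier A. \<forall>v\<in>D_carrier A. D_le le u v \<longrightarrow> f u \<le> f v) \<longleftrightarrow>
   (f (Inr 0) \<le> f (Inr 1) \<and> f (Inr 1) \<le> f (Inr 2) \<and> f (Inr 0) \<le> f (Inr 2) \<and>
    (\<forall>x\<in>A. f (Inr 0) \<le> f (Inl x) \<and> f (Inl x) \<le> f (Inr 2)) \<and>
    (\<forall>x\<in>A. \<forall>y\<in>A. le x y \<longrightarrow> f (Inl x) \<le> f (Inl y)))"
  unfolding D_carrier_def D_le_def by auto

lemma D_mem[simp]: "Inl x \<in> D_carrier A \<longleftrightarrow> x \<in> A" "Inr k \<in> D_carrier A \<longleftrightarrow> k \<le> 2"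
  by (auto simp: D_carrier_def)

definition SD where "SD A le n = {f \<in> D_carrier A \<rightarrow>\<^sub>E {1..n}.
      \<forall>u\<in>D_carrier A. \<forall>v\<in>D_carrier A. (D_le le u v \<and> u \<noteq> v) \<longrightarrow> f u < f v}"

definition psi :: "nat \<Rightarrow> nat \<Rightarrow> nat \<Rightarrow> nat \<times> ('a \<Rightarrow> nat) \<Rightarrow> ('a + nat \<Rightarrow> nat)" where
  "psi a b d = (\<lambda>(c,g) u. case u of Inl x \<Rightarrow> g x | Inr k \<Rightarrow>
     (if k = 0 then a else if k = 1 then c else if k = 2 then b else undefined))"

lemma psi_simps[simp]: "psi a b d (c,g) (Inl x) = g x" "psi a b d (c,g) (Inr 0) = a"
  "psi a b d (c,g) (Inr 1) = c" "psi a b d (c,g) (Inr (Suc 0)) = c" "psi a b d (c,g) (Inr 2) = b"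
  "k > 2 \<Longrightarrow> psi a b d (c,g) (Inr k) = undefined"
  by (auto simp: psi_def)

lemma fib_strict_card:
  assumes "1 \<le> d" "d+m+1 \<le> n"
  shows "card {f \<in> SD A le n. f (Inr 0) = d \<and> f (Inr 2) = d+m+1} = m * Omega A le m"
proof -
  let ?F = "{f \<in> SD A le n. f (Inr 0) = d \<and> f (Inr 2) = d+m+1}"
  let ?T = "{d+1..d+m} \<times> SF A le d m"
  have "bij_betw (\<lambda>f. (f (Inr 1), restrict (f \<circ> Inl) A)) ?F ?T"
  proof (rule bij_betw_byWitness[where f'="psi d (d+m+1) d"])
    show "\<forall>f\<in>?F. psi d (d+m+1) d (f (Inr 1), restrict (f \<circ> Inl) A) = f"
    proof
      fix f assume f: "f \<in> ?F"
      show "psi d (d+m+1) d (f (Inr 1), restrict (f \<circ> Inl) A) = f"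
      proof
        fix u show "psi d (d+m+1) d (f (Inr 1), restrict (f \<circ> Inl) A) u = f u"
        proof (cases u)
          case (Inl x) then show ?thesis using f by (auto simp: SD_def PiE_def extensional_def)
        next
          case (Inr k) then show ?thesis using f
            by (cases "k = 0"; cases "k = 1"; cases "k = 2") (auto simp: SD_def PiE_def extensional_def)
        qed
      qed
    qed
    show "\<forall>a'\<in>?T. (\<lambda>f. (f (Inr 1), restrict (f \<circ> Inl) A)) (psi d (d+m+1) d a') = a'"
      by (auto simp: SF_def PiE_def extensional_def fun_eq_iff)
    show "(\<lambda>f. (f (Inr 1), restrict (f \<circ> Inl) A)) ` ?F \<subseteq> ?T"
      by (auto simp: SD_def SF_def D_strict_iff)
    show "psi d (d+m+1) d ` ?T \<subseteq> ?F"
    proof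
      fix f assume "f \<in> psi d (d+m+1) d ` ?T"
      then obtain c g where cg: "c \<in> {d+1..d+m}" "g \<in> SF A le d m" and f: "f = psi d (d+m+1) d (c,g)" by auto
      have gx: "\<forall>x\<in>A. g x \<in> {d+1..d+m}" using cg by (auto simp: SF_def PiE_iff)
      have "f \<in> D_carrier A \<rightarrow>\<^sub>E {1..n}"
      proof
        fix u assume "u \<in> D_carrier A" then show "f u \<in> {1..n}"
          using cg assms gx unfolding f by (cases u) (fastforce simp: SF_def D_carrier_def)+
      next
        fix u assume "u \<notin> D_carrier A" then show "f u = undefined"
          using cg unfolding f by (cases u) (auto simp: SF_def PiE_def extensional_def)
      qed
      then show "f \<in> ?F" using cg gx unfolding f by (fastforce simp: SD_def SF_def D_strict_iff)
    qed
  qed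
  then have "card ?F = card ?T" by (rule bij_betw_same_card)
  also have "\<dots> = m * Omega A le m" by (simp add: card_cartesian_product SF_card)
  finally show ?thesis .
qed

lemma finite_D: "finite A \<Longrightarrow> finite (D_carrier A)"
  by (simp add: D_carrier_def)

lemma SD_card:
  assumes "finite A"
  shows "card (SD A le n) = (\<Sum>m<n. (n-1-m)*(m*Omega A le m))"
proof -
  let ?F = "\<lambda>p. {f \<in> SD A le n. f (Inr 0) = snd p \<and> f (Inr 2) = snd p + fst p + 1}"
  let ?I = "Sigma {..<n} (\<lambda>m. {1..<n-m})"
  have fin0: "finite (D_carrier A \<rightarrow>\<^sub>E {1..n})" using assms by (intro finite_PiE finite_D) auto
  have fin: "finite (SD A le n)"
    by (rule finite_subset[OF _ fin0]) (simp add: SD_def)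
  have eq: "SD A le n = (\<Union>p\<in>?I. ?F p)"
  proof
    show "SD A le n \<subseteq> (\<Union>p\<in>?I. ?F p)"
    proof
      fix f assume f: "f \<in> SD A le n"
      have lt: "f (Inr 0) < f (Inr 2)" using f by (simp add: SD_def D_strict_iff)
      have r: "f (Inr 0) \<ge> 1" "f (Inr 2) \<le> n" using f by (auto simp: SD_def PiE_iff)
      let ?p = "(f (Inr 2) - f (Inr 0) - 1, f (Inr 0))"
      have "?p \<in> ?I" using lt r by auto
      moreover have "f \<in> ?F ?p" using f lt by auto
      ultimately show "f \<in> (\<Union>p\<in>?I. ?F p)" by blast
    qed
  qed blast
  have "card (SD A le n) = card (\<Union>p\<in>?I. ?F p)" using eq by (rule arg_cong)
  also have "card (\<Union>p\<in>?I. ?F p) = (\<Sum>p\<in>?I. card (?F p))"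
  proof (rule card_UN_disjoint)
    show "finite ?I" by (intro finite_SigmaI) auto
    show "\<forall>i::nat\<times>nat\<in>?I. finite (?F i)" using fin by simp
    show "\<forall>i::nat\<times>nat\<in>?I. \<forall>j\<in>?I. i \<noteq> j \<longrightarrow> ?F i \<inter> ?F j = {}"
    proof (intro ballI impI)
      fix i j :: "nat\<times>nat" assume "i \<noteq> j"
      then show "?F i \<inter> ?F j = {}" by (cases i; cases j) auto
    qed
  qed
  also have "\<dots> = (\<Sum>p\<in>?I. fst p * Omega A le (fst p))"
  proof (rule sum.cong[OF refl])
    fix p assume "p \<in> ?I"
    then obtain m d where p: "p = (m,d)" "m < n" "1 \<le> d" "d < n - m" by (cases p) auto
    then show "card (?F p) = fst p * Omega A le (fst p)"
      using fib_strict_card[of d m n A le] by simp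
  qed
  also have "\<dots> = (\<Sum>m<n. \<Sum>d\<in>{1..<n-m}. m * Omega A le m)"
  proof -
    have "(\<Sum>m<n. \<Sum>d\<in>{1..<n-m}. m * Omega A le m) = (\<Sum>(m,d)\<in>?I. m * Omega A le m)"
      by (rule sum.Sigma) auto
    then show ?thesis by (simp add: split_def)
  qed
  also have "\<dots> = (\<Sum>m<n. (n-1-m)*(m*Omega A le m))"
    by simp
  finally show ?thesis .
qed

definition SW where "SW A le n = {f \<in> D_carrier A \<rightarrow>\<^sub>E {1..n}.
      \<forall>u\<in>D_carrier A. \<forall>v\<in>D_carrier A. D_le le u v \<longrightarrow> f u \<le> f v}"

lemma fib_weak_card:
  assumes "d+m \<le> n"
  shows "card {f \<in> SW A le n. f (Inr 0) = d+1 \<and> f (Inr 2) = d+m} = m * Omega_plus A le m"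
proof -
  let ?F = "{f \<in> SW A le n. f (Inr 0) = d+1 \<and> f (Inr 2) = d+m}"
  let ?T = "{d+1..d+m} \<times> WF A le d m"
  have "bij_betw (\<lambda>f. (f (Inr 1), restrict (f \<circ> Inl) A)) ?F ?T"
  proof (rule bij_betw_byWitness[where f'="psi (d+1) (d+m) d"])
    show "\<forall>f\<in>?F. psi (d+1) (d+m) d (f (Inr 1), restrict (f \<circ> Inl) A) = f"
    proof
      fix f assume f: "f \<in> ?F"
      show "psi (d+1) (d+m) d (f (Inr 1), restrict (f \<circ> Inl) A) = f"
      proof
        fix u show "psi (d+1) (d+m) d (f (Inr 1), restrict (f \<circ> Inl) A) u = f u"
        proof (cases u)
          case (Inl x) then show ?thesis using f by (auto simp: SW_def PiE_def extensional_def)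
        next
          case (Inr k) then show ?thesis using f
            by (cases "k = 0"; cases "k = 1"; cases "k = 2") (auto simp: SW_def PiE_def extensional_def)
        qed
      qed
    qed
    show "\<forall>a'\<in>?T. (\<lambda>f. (f (Inr 1), restrict (f \<circ> Inl) A)) (psi (d+1) (d+m) d a') = a'"
      by (auto simp: WF_def PiE_def extensional_def fun_eq_iff)
    show "(\<lambda>f. (f (Inr 1), restrict (f \<circ> Inl) A)) ` ?F \<subseteq> ?T"
      by (auto simp: SW_def WF_def D_weak_iff)
    show "psi (d+1) (d+m) d ` ?T \<subseteq> ?F"
    proof
      fix f assume "f \<in> psi (d+1) (d+m) d ` ?T"
      then obtain c g where cg: "c \<in> {d+1..d+m}" "g \<in> WF A le d m" and f: "f = psi (d+1) (d+m) d (c,g)" by auto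
      have gx: "\<forall>x\<in>A. g x \<in> {d+1..d+m}" using cg by (auto simp: WF_def PiE_iff)
      have "f \<in> D_carrier A \<rightarrow>\<^sub>E {1..n}"
      proof
        fix u assume "u \<in> D_carrier A" then show "f u \<in> {1..n}"
          using cg assms gx unfolding f by (cases u) (fastforce simp: WF_def D_carrier_def)+
      next
        fix u assume "u \<notin> D_carrier A" then show "f u = undefined"
          using cg unfolding f by (cases u) (auto simp: WF_def PiE_def extensional_def)
      qed
      then show "f \<in> ?F" using cg gx unfolding f by (fastforce simp: SW_def WF_def D_weak_iff)
    qed
  qed
  then have "card ?F = card ?T" by (rule bij_betw_same_card)
  also have "\<dots> = m * Omega_plus A le m" by (simp add: card_cartesian_product WF_card)
  finally show ?thesis .
qed


lemma SW_card:
  assumes "finite A"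
  shows "card (SW A le n) = (\<Sum>m\<in>{1..n}. (n+1-m)*(m*Omega_plus A le m))"
proof -
  let ?F = "\<lambda>p. {f \<in> SW A le n. f (Inr 0) = snd p + 1 \<and> f (Inr 2) = snd p + fst p}"
  let ?I = "Sigma {1..n} (\<lambda>m. {0..n-m})"
  have fin0: "finite (D_carrier A \<rightarrow>\<^sub>E {1..n})" using assms by (intro finite_PiE finite_D) auto
  have fin: "finite (SW A le n)"
    by (rule finite_subset[OF _ fin0]) (simp add: SW_def)
  have eq: "SW A le n = (\<Union>p\<in>?I. ?F p)"
  proof
    show "SW A le n \<subseteq> (\<Union>p\<in>?I. ?F p)"
    proof
      fix f assume f: "f \<in> SW A le n"
      have lt: "f (Inr 0) \<le> f (Inr 2)" using f by (simp add: SW_def D_weak_iff)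
      have r: "f (Inr 0) \<ge> 1" "f (Inr 2) \<le> n" using f by (auto simp: SW_def PiE_iff)
      let ?p = "(f (Inr 2) + 1 - f (Inr 0), f (Inr 0) - 1)"
      have "?p \<in> ?I" using lt r by auto
      moreover have "f \<in> ?F ?p" using f lt r by auto
      ultimately show "f \<in> (\<Union>p\<in>?I. ?F p)" by blast
    qed
  qed blast
  have "card (SW A le n) = card (\<Union>p\<in>?I. ?F p)" using eq by (rule arg_cong)
  also have "card (\<Union>p\<in>?I. ?F p) = (\<Sum>p\<in>?I. card (?F p))"
  proof (rule card_UN_disjoint)
    show "finite ?I" by (intro finite_SigmaI) auto
    show "\<forall>i::nat\<times>nat\<in>?I. finite (?F i)" using fin by simp
    show "\<forall>i::nat\<times>nat\<in>?I. \<forall>j\<in>?I. i \<noteq> j \<longrightarrow> ?F i \<inter> ?F j = {}"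
    proof (intro ballI impI)
      fix i j :: "nat\<times>nat" assume "i \<noteq> j"
      then show "?F i \<inter> ?F j = {}" by (cases i; cases j) auto
    qed
  qed
  also have "\<dots> = (\<Sum>p\<in>?I. fst p * Omega_plus A le (fst p))"
  proof (rule sum.cong[OF refl])
    fix p assume "p \<in> ?I"
    then obtain m d where p: "p = (m,d)" "1 \<le> m" "m \<le> n" "d \<le> n - m" by (cases p) auto
    then show "card (?F p) = fst p * Omega_plus A le (fst p)"
      using fib_weak_card[of d m n A le] by simp
  qed
  also have "\<dots> = (\<Sum>m\<in>{1..n}. \<Sum>d\<in>{0..n-m}. m * Omega_plus A le m)"
  proof -
    have "(\<Sum>m\<in>{1..n}. \<Sum>d\<in>{0..n-m}. m * Omega_plus A le m) = (\<Sum>(m,d)\<in>?I. m * Omega_plus A le m)"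
      by (rule sum.Sigma) auto
    then show ?thesis by (simp add: split_def)
  qed
  also have "\<dots> = (\<Sum>m\<in>{1..n}. (n+1-m)*(m*Omega_plus A le m))"
    by (intro sum.cong refl) (simp add: Suc_diff_le)
  finally show ?thesis .
qed

lemma chain_Omega: "Omega {1..n} (\<le>) m = m choose n"
proof -
  let ?C = "{f \<in> {1..n} \<rightarrow>\<^sub>E {1..m}. \<forall>u\<in>{1..n}. \<forall>v\<in>{1..n}. (u \<le> v \<and> u \<noteq> v) \<longrightarrow> f u < f v}"
  let ?S = "{B. B \<subseteq> {1..m} \<and> card B = n}"
  let ?psi = "\<lambda>S. restrict (\<lambda>i. sorted_list_of_set S ! (i-1)) {1..n::nat}"
  have key: "sorted_list_of_set (f ` {1..n}) = map f [1..<n+1]" if f: "f \<in> ?C" for f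
  proof -
    have "sorted_wrt (<) (map f [1..<n+1])"
      unfolding sorted_wrt_iff_nth_less using f by (auto simp del: upt_Suc)
    moreover have "set (map f [1..<n+1]) = f ` {1..n}" by auto
    ultimately show ?thesis
      using strict_sorted_equal[of "map f [1..<n+1]" "sorted_list_of_set (f ` {1..n})"]
      by simp
  qed
  have "bij_betw (\<lambda>f. f ` {1..n}) ?C ?S"
  proof (rule bij_betw_byWitness[where f'="?psi"])
    show "\<forall>f\<in>?C. ?psi (f ` {1..n}) = f"
    proof
      fix f assume f: "f \<in> ?C"
      show "?psi (f ` {1..n}) = f"
      proof
        fix i show "?psi (f ` {1..n}) i = f i"
        proof (cases "i \<in> {1..n}")
          case True
          then have "?psi (f ` {1..n}) i = map f [1..<n+1] ! (i-1)" using key[OF f] by simp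
          also have "\<dots> = f i" using True by (subst nth_map) (auto simp del: upt_Suc)
          finally show ?thesis .
        next
          case False
          have "f i = undefined" using f False by (simp add: PiE_iff extensional_def)
          then show ?thesis using False by (simp only: restrict_apply if_False simp_thms)
        qed
      qed
    qed
    show "\<forall>S\<in>?S. ?psi S ` {1..n} = S"
    proof
      fix S assume S: "S \<in> ?S"
      then have fin: "finite S" using finite_subset[of S "{1..m}"] by auto
      have im: "(\<lambda>i. i - 1) ` {1..n} = {..<n}"
      proof
        show "{..<n} \<subseteq> (\<lambda>i. i - 1) ` {1..n}"
        proof
          fix x assume "x \<in> {..<n}"
          then have "Suc x \<in> {1..n}" "x = Suc x - 1" by auto
          then show "x \<in> (\<lambda>i. i - 1) ` {1..n}" by blast
        qed
      qed auto
      have "?psi S ` {1..n} = (\<lambda>i. sorted_list_of_set S ! (i - 1)) ` {1..n}"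
        by (rule image_restrict_eq)
      also have "\<dots> = (\<lambda>i. sorted_list_of_set S ! i) ` ((\<lambda>i. i - 1) ` {1..n})"
        by (simp add: image_comp o_def)
      finally have "?psi S ` {1..n} = (\<lambda>i. sorted_list_of_set S ! i) ` {..<n}"
        unfolding im .
      also have "\<dots> = set (sorted_list_of_set S)"
        using S fin by (auto simp: set_conv_nth)
      finally show "?psi S ` {1..n} = S" using fin by simp
    qed
    show "(\<lambda>f. f ` {1..n}) ` ?C \<subseteq> ?S"
    proof
      fix B assume "B \<in> (\<lambda>f. f ` {1..n}) ` ?C"
      then obtain f where f: "f \<in> ?C" and B: "B = f ` {1..n}" by auto
      have "inj_on f {1..n}"
      proof (rule inj_onI)
        have mono: "\<And>u v. u\<in>{1..n} \<Longrightarrow> v\<in>{1..n} \<Longrightarrow> u < v \<Longrightarrow> f u < f v" using f by auto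
        fix x y assume xy: "x \<in> {1..n}" "y \<in> {1..n}" "f x = f y"
        show "x = y"
        proof (rule ccontr)
          assume "x \<noteq> y"
          then consider "x < y" | "y < x" by linarith
          then show False using mono[of x y] mono[of y x] xy by cases auto
        qed
      qed
      then show "B \<in> ?S" using f B by (auto simp: card_image)
    qed
    show "?psi ` ?S \<subseteq> ?C"
    proof
      fix g assume "g \<in> ?psi ` ?S"
      then obtain S where S: "S \<in> ?S" and g: "g = ?psi S" by auto
      then have fin: "finite S" using finite_subset[of S "{1..m}"] by auto
      have len: "length (sorted_list_of_set S) = n" using S fin by simp
      have "sorted_list_of_set S ! (i-1) \<in> S" if "i \<in> {1..n}" for i
        using that len fin nth_mem[of "i-1" "sorted_list_of_set S"] by auto
      then have r: "g \<in> {1..n} \<rightarrow>\<^sub>E {1..m}" using S unfolding g by auto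
      have "g u < g v" if "u \<in> {1..n}" "v \<in> {1..n}" "u \<le> v" "u \<noteq> v" for u v
        using that len sorted_wrt_nth_less[OF strict_sorted_list_of_set, of "u-1" "v-1" S]
        unfolding g by auto
      with r show "g \<in> ?C" by blast
    qed
  qed
  then have "card ?C = card ?S" by (rule bij_betw_same_card)
  also have "\<dots> = m choose n" using n_subsets[of "{1..m}" n] by simp
  finally show ?thesis by (simp add: Omega_def)
qed

lemma divX: "fps_X ^ a / (1 - fps_X) ^ k = fps_X ^ a * inverse (1 - fps_X :: rat fps) ^ k"
  by (simp add: fps_divide_unit fps_inverse_power)

lemma zeta_alt: "zeta j = fps_X ^ j * inverse (1 - fps_X :: rat fps) ^ (j+1)"
  unfolding zeta_def by (rule divX)

lemma Z_chain: assumes "n \<ge> 1" shows "Z {1..n} (\<le>) = zeta n"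
proof (rule fps_ext)
  fix k
  have c: "fps_nth (zeta n) k = (if k < n then 0 else of_nat (k choose n))"
  proof -
    have "fps_nth (zeta n) k = fps_nth (fps_X ^ n * inverse ((1 - fps_X :: rat fps) ^ (n+1))) k"
      unfolding zeta_def by (simp add: fps_divide_unit)
    also have "\<dots> = (if k < n then 0 else of_nat ((n + 1 + (k - n) - 1) choose (k - n)))"
      unfolding fps_X_power_mult_nth
      using one_minus_const_fps_X_neg_power'[of "n+1" "1::rat"] by simp
    also have "\<dots> = (if k < n then 0 else of_nat (k choose n))"
      by (auto simp: binomial_symmetric[symmetric])
    finally show ?thesis .
  qed
  show "fps_nth (Z {1..n} (\<le>)) k = fps_nth (zeta n) k"
    unfolding c Z_def fps_nth_Abs_fps chain_Omega using assms by auto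
qed

lemma deriv_U: "fps_deriv (inverse (1 - fps_X :: rat fps)) = inverse (1 - fps_X) ^ 2"
  by (simp add: fps_inverse_deriv)

lemma part3: assumes "n \<ge> 1"
  shows "fps_X ^ 3 / (1 - fps_X) ^ 2 * fps_deriv (zeta n)
       = of_nat n * zeta (n + 2) + of_nat (n + 1) * zeta (n + 3)"
proof -
  obtain k where k: "n = Suc k" using assms by (cases n) auto
  define U where "U = inverse (1 - fps_X :: rat fps)"
  have dU: "fps_deriv U = U^2" unfolding U_def by (rule deriv_U)
  have dpow: "fps_deriv (a ^ Suc j) = of_nat (Suc j) * fps_deriv a * a ^ j" for a :: "rat fps" and j
    using fps_deriv_power'[of a "Suc j"] by (simp only: diff_Suc_1)
  have "fps_deriv (zeta n) = fps_X ^ Suc k * (of_nat (Suc (Suc k)) * U^2 * U ^ Suc k) + of_nat (Suc k) * fps_X ^ k * U ^ Suc (Suc k)"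
  proof -
    have z: "zeta n = fps_X ^ Suc k * U ^ Suc (Suc k)" unfolding zeta_alt U_def k by simp
    have d1: "fps_deriv (U ^ Suc (Suc k)) = of_nat (Suc (Suc k)) * U^2 * U ^ Suc k"
      by (simp only: dpow dU)
    have d2: "fps_deriv ((fps_X :: rat fps) ^ Suc k) = of_nat (Suc k) * fps_X ^ k"
      by (simp only: dpow fps_deriv_fps_X mult_1_right)
    show ?thesis by (simp only: z fps_deriv_mult d1 d2)
  qed
  note dz = this
  show ?thesis unfolding dz unfolding zeta_alt U_def[symmetric] divX k
    by (simp add: power_add eval_nat_numeral algebra_simps)
qed

theorem mainTheorem6:
  fixes A :: "'a set" and le :: "'a \<Rightarrow> 'a \<Rightarrow> bool"
  assumes "finite A" and "A \<noteq> {}" and "poset_on A le"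
  shows "Z (D_carrier A) (D_le le)
           = fps_X ^ 3 / (1 - fps_X) ^ 2 * fps_deriv (Z A le)
       \<and> Z_plus (D_carrier A) (D_le le)
           = fps_X / (1 - fps_X) ^ 2 * fps_deriv (Z_plus A le)
       \<and> (\<forall>n::nat \<ge> 1. Z (D_carrier {1..n}) (D_le (\<le>))
           = of_nat n * zeta (n + 2) + of_nat (n + 1) * zeta (n + 3))"
proof -
  have p1: "Z (D_carrier B) (D_le r) = fps_X ^ 3 / (1 - fps_X) ^ 2 * fps_deriv (Z B r)"
    if "finite B" for B :: "'b set" and r
    unfolding Z_def
  proof (rule strict_fps)
    fix n
    have "Omega (D_carrier B) (D_le r) n = card (SD B r n)" by (simp add: Omega_def SD_def)
    then show "Omega (D_carrier B) (D_le r) n = (\<Sum>m<n. (n - 1 - m) * (m * Omega B r m))"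
      using SD_card[OF that] by simp
  qed
  have p2: "Z_plus (D_carrier A) (D_le le) = fps_X / (1 - fps_X) ^ 2 * fps_deriv (Z_plus A le)"
    unfolding Z_plus_def
  proof (rule weak_fps)
    fix n
    have "Omega_plus (D_carrier A) (D_le le) n = card (SW A le n)" by (simp add: Omega_plus_def SW_def)
    then show "Omega_plus (D_carrier A) (D_le le) n = (\<Sum>m\<in>{1..n}. (n + 1 - m) * (m * Omega_plus A le m))"
      using SW_card[OF assms(1)] by simp
  qed
  have p3: "Z (D_carrier {1..n}) (D_le (\<le>)) = of_nat n * zeta (n + 2) + of_nat (n + 1) * zeta (n + 3)"
    if "n \<ge> 1" for n :: nat
    using p1[of "{1..n}" "(\<le>)"] Z_chain[OF that] part3[OF that] by simp
  show ?thesis using p1[OF assms(1)] p2 p3 by blast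
qed

end
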